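(* Let $L$ be a sublattice of $A_n$ of rank $n$. Then $$\Sigma^c(L)=\bigcup_{\nu\in\mathrm{Ext}^c(L)}\{x\in\mathbb R^{n+1}:x\ge\nu\}.$$
   Context: Let $n\ge 1$, $H_0=\{x\in\mathbb R^{n+1}:\sum_i x_i=0\}$ and $A_n=H_0\cap\mathbb Z^{n+1}$. For $x\in\mathbb R^{n+1}$, $\deg(x)=\sum_i x_i$. Write $x\le y$ iff $x_i\le y_i$ for all $i$. Let $\Sigma^{\mathbb R}(L)=\{x\in\mathbb R^{n+1}: x\not\le q\text{ for all }q\in L\}$ and let $\Sigma^c(L)$ be its topological closure in $\mathbb R^{n+1}$. $\mathrm{Ext}^c(L)$ is the set of points $x\in\Sigma^c(L)$ that are local minima of $\deg$ on $\Sigma^c(L)$, i.e. there is an open ball $B\ni x$ with $\deg(x)\le\deg(y)$ for all $y\in B\cap\Sigma^c(L)$. *)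

theory Defs
  imports "HOL-Analysis.Analysis"
begin

text \<open>Ambient space R^{n+1} is real^'n with CARD('n) = n+1.\<close>

definition deg :: "real^'n \<Rightarrow> real" where
  "deg x = (\<Sum>i\<in>UNIV. x $ i)"

definition cw_le :: "real^'n \<Rightarrow> real^'n \<Rightarrow> bool" where
  "cw_le x y \<longleftrightarrow> (\<forall>i. x $ i \<le> y $ i)"

definition A_lattice :: "(real^'n) set" where
  "A_lattice = {x. (\<forall>i. x $ i \<in> \<int>) \<and> deg x = 0}"

definition sublattice_of_A :: "(real^'n) set \<Rightarrow> bool" where
  "sublattice_of_A L \<longleftrightarrow> L \<subseteq> A_lattice \<and> 0 \<in> L \<and>
     (\<forall>x\<in>L. \<forall>y\<in>L. x + y \<in> L) \<and> (\<forall>x\<in>L. - x \<in> L)"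

definition lattice_rank :: "(real^'n) set \<Rightarrow> nat" where
  "lattice_rank L = dim (span L)"

definition SigmaR :: "(real^'n) set \<Rightarrow> (real^'n) set" where
  "SigmaR L = {x. \<forall>q\<in>L. \<not> cw_le x q}"

definition SigmaC :: "(real^'n) set \<Rightarrow> (real^'n) set" where
  "SigmaC L = closure (SigmaR L)"

definition ExtC :: "(real^'n) set \<Rightarrow> (real^'n) set" where
  "ExtC L = {x \<in> SigmaC L. \<exists>B. open B \<and> x \<in> B \<and>
              (\<forall>y\<in>B \<inter> SigmaC L. deg x \<le> deg y)}"

end

theory Submission
  imports Defs
begin

lemma SigmaC_eq: "SigmaC L = {x::real^'n. \<forall>q\<in>L. \<exists>i. q$i \<le> x$i}"
proof
  have cl: "closed {x::real^'n. \<forall>q\<in>L. \<exists>i. q$i \<le> x$i}"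
  proof -
    have "{x::real^'n. \<forall>q\<in>L. \<exists>i. q$i \<le> x$i} = (\<Inter>q\<in>L. \<Union>i. {x. x$i \<ge> q$i})" by auto
    moreover have "closed (\<Inter>q\<in>L. \<Union>i. {x::real^'n. x$i \<ge> q$i})"
      by (intro closed_INT closed_Union) (auto simp: closed_halfspace_component_ge_cart)
    ultimately show ?thesis by simp
  qed
  have "SigmaR L \<subseteq> {x::real^'n. \<forall>q\<in>L. \<exists>i. q$i \<le> x$i}"
    unfolding SigmaR_def cw_le_def by (auto simp: not_le intro: less_imp_le)
  then show "SigmaC L \<subseteq> {x::real^'n. \<forall>q\<in>L. \<exists>i. q$i \<le> x$i}"
    unfolding SigmaC_def using cl closure_minimal by blast
next
  show "{x::real^'n. \<forall>q\<in>L. \<exists>i. q$i \<le> x$i} \<subseteq> SigmaC L"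
  proof
    fix x :: "real^'n" assume x: "x \<in> {x::real^'n. \<forall>q\<in>L. \<exists>i. q$i \<le> x$i}"
    define one :: "real^'n" where "one = (\<chi> i. 1)"
    define f where "f k = x + inverse (real (Suc k)) *\<^sub>R one" for k
    have "f k \<in> SigmaR L" for k
    proof -
      have "\<not> cw_le (f k) q" if qL: "q \<in> L" for q
      proof -
        obtain i where "q$i \<le> x$i" using x qL by auto
        moreover have "x$i < f k $ i" by (simp add: f_def one_def)
        ultimately show ?thesis unfolding cw_le_def by (meson less_le_trans not_le)
      qed
      then show ?thesis unfolding SigmaR_def by auto
    qed
    moreover have "f \<longlonglongrightarrow> x"
    proof -
      have "f \<longlonglongrightarrow> x + 0 *\<^sub>R one" unfolding f_def
        by (intro tendsto_add tendsto_const tendsto_scaleR LIMSEQ_inverse_real_of_nat)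
      then show ?thesis by simp
    qed
    ultimately show "x \<in> SigmaC L" unfolding SigmaC_def closure_sequential by blast
  qed
qed

lemma nat_mult_in:
  assumes "sublattice_of_A L" "l \<in> L" shows "of_nat n *\<^sub>R l \<in> L"
proof (induction n)
  case 0 then show ?case using assms by (simp add: sublattice_of_A_def)
next
  case (Suc n)
  have "of_nat (Suc n) *\<^sub>R l = of_nat n *\<^sub>R l + l" by (simp add: algebra_simps)
  then show ?case using Suc assms by (simp add: sublattice_of_A_def)
qed

lemma int_mult_in:
  assumes "sublattice_of_A L" "l \<in> L" shows "of_int k *\<^sub>R l \<in> L"
proof (cases k rule: int_cases)
  case (nonneg n) then show ?thesis using nat_mult_in[OF assms, of n] by simp
next
  case (neg n)
  have "of_int k *\<^sub>R l = - (of_nat (Suc n) *\<^sub>R l)" using neg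
    by (metis of_int_minus of_int_of_nat_eq scaleR_minus_left)
  then show ?thesis using nat_mult_in[OF assms, of "Suc n"] assms(1) by (simp add: sublattice_of_A_def)
qed

lemma sum_in:
  assumes "sublattice_of_A L" "finite t" "\<forall>a\<in>t. g a \<in> L" shows "sum g t \<in> L"
  using assms(2,3)
proof (induction t rule: finite_induct)
  case empty then show ?case using assms(1) by (simp add: sublattice_of_A_def)
next
  case (insert a t) then show ?case using assms(1) by (simp add: sublattice_of_A_def)
qed

lemma deg_add: "deg (x + y) = deg x + deg y" by (simp add: deg_def sum.distrib)
lemma deg_scale: "deg (c *\<^sub>R x) = c * deg x" by (simp add: deg_def sum_distrib_left)
lemma deg_diff: "deg (x - y) = deg x - deg y" by (simp add: deg_def sum_subtractf)

lemma span_L: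
  fixes L :: "(real^'n) set"
  assumes "sublattice_of_A L" "lattice_rank L = CARD('n) - 1"
  shows "span L = {x. deg x = 0}"
proof -
  define H :: "(real^'n) set" where "H = {x. deg x = 0}"
  have sub: "subspace H" unfolding subspace_def H_def
    by (auto simp: deg_def sum.distrib sum_distrib_left[symmetric])
  have LH: "L \<subseteq> H" using assms(1) unfolding sublattice_of_A_def A_lattice_def H_def by auto
  define one :: "real^'n" where "one = (\<chi> i. 1)"
  have "deg one = real CARD('n)" by (simp add: deg_def one_def)
  then have "one \<notin> H" by (simp add: H_def)
  then have "span H \<subset> span (UNIV :: (real^'n) set)"
    using sub by (metis UNIV_I span_UNIV span_eq_iff psubsetI subset_UNIV)
  then have "dim H < dim (UNIV :: (real^'n) set)" by (rule dim_psubset)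
  then have "dim H \<le> dim L" using assms(2) by (simp add: lattice_rank_def dim_span)
  then have "span L = span H" using dim_eq_span[OF LH] by simp
  then show ?thesis using sub by (simp add: span_eq_iff H_def)
qed

lemma big_vec:
  fixes L :: "(real^'n) set"
  assumes L: "sublattice_of_A L" and r: "lattice_rank L = CARD('n) - 1"
  shows "\<exists>p\<in>L. \<forall>j. j \<noteq> i \<longrightarrow> M < p$j"
proof -
  define v :: "real^'n" where "v = (\<chi> j. if j = i then -(real CARD('n) - 1) else 1)"
  have "deg v = v$i + sum (($) v) (UNIV - {i})"
    unfolding deg_def by (simp add: sum.remove)
  also have "sum (($) v) (UNIV - {i}) = real CARD('n) - 1"
    by (simp add: v_def card_Diff_singleton of_nat_diff)
  finally have "deg v = 0" by (simp add: v_def)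
  then have "v \<in> span L" using span_L[OF L r] by simp
  then obtain t u where t: "finite t" "t \<subseteq> L" and vs: "(\<Sum>a\<in>t. u a *\<^sub>R a) = v"
    by (auto simp: span_explicit)
  define C where "C = (\<Sum>a\<in>t. \<Sum>j\<in>UNIV. \<bar>a$j\<bar>)"
  define s where "s = M + C + 1"
  define p where "p = (\<Sum>a\<in>t. of_int \<lfloor>s * u a\<rfloor> *\<^sub>R a)"
  have "p \<in> L" unfolding p_def
    using t by (intro sum_in[OF L]) (auto intro: int_mult_in[OF L])
  moreover have "M < p$j" if "j \<noteq> i" for j
  proof -
    have vj: "v$j = 1" using that by (simp add: v_def)
    have "s = (\<Sum>a\<in>t. s * u a * a$j)"
      using arg_cong[OF vs, of "\<lambda>w. s * w$j"] vj by (simp add: sum_distrib_left mult.assoc)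
    then have "p$j - s = (\<Sum>a\<in>t. (of_int \<lfloor>s * u a\<rfloor> - s * u a) * a$j)"
      by (simp add: p_def sum_subtractf algebra_simps)
    also have "\<dots> \<ge> (\<Sum>a\<in>t. - \<bar>a$j\<bar>)"
    proof (rule sum_mono)
      fix a
      have f1: "of_int \<lfloor>s * u a\<rfloor> - s * u a \<le> 0" "of_int \<lfloor>s * u a\<rfloor> - s * u a > -1"
        by linarith+
      show "- \<bar>a$j\<bar> \<le> (of_int \<lfloor>s * u a\<rfloor> - s * u a) * a$j"
      proof (cases "a$j \<ge> 0")
        case True
        then have "(of_int \<lfloor>s * u a\<rfloor> - s * u a) * a$j \<ge> -1 * a$j"
          using f1 by (intro mult_right_mono) auto
        then show ?thesis using True by simp
      next
        case False
        then have "(of_int \<lfloor>s * u a\<rfloor> - s * u a) * a$j \<ge> 0 * a$j"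
          using f1 by (intro mult_right_mono_neg) auto
        then show ?thesis using abs_ge_zero[of "a$j"] by linarith
      qed
    qed
    finally have "p$j - s \<ge> - (\<Sum>a\<in>t. \<bar>a$j\<bar>)" by (simp add: sum_negf)
    moreover have "(\<Sum>a\<in>t. \<bar>a$j\<bar>) \<le> C" unfolding C_def
      by (intro sum_mono member_le_sum) auto
    ultimately show ?thesis unfolding s_def by linarith
  qed
  ultimately show ?thesis by blast
qed

theorem mainTheorem6:
  fixes L :: "(real^'n) set"
  assumes "CARD('n) \<ge> 2"
    and "sublattice_of_A L"
    and "lattice_rank L = CARD('n) - 1"
  shows "SigmaC L = (\<Union>\<nu>\<in>ExtC L. {x. cw_le \<nu> x})"
proof
  show "(\<Union>\<nu>\<in>ExtC L. {x. cw_le \<nu> x}) \<subseteq> SigmaC L"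
  proof
    fix x assume "x \<in> (\<Union>\<nu>\<in>ExtC L. {x. cw_le \<nu> x})"
    then obtain \<nu> where nu: "\<nu> \<in> SigmaC L" "cw_le \<nu> x" unfolding ExtC_def by auto
    show "x \<in> SigmaC L" using nu unfolding SigmaC_eq cw_le_def by (fastforce intro: order_trans)
  qed
next
  show "SigmaC L \<subseteq> (\<Union>\<nu>\<in>ExtC L. {x. cw_le \<nu> x})"
  proof
    fix x assume xT: "x \<in> SigmaC L"
    have "\<forall>i. \<exists>p\<in>L. \<forall>j. j \<noteq> i \<longrightarrow> (\<Sum>k\<in>UNIV. \<bar>x$k\<bar>) < p$j"
      using big_vec[OF assms(2,3)] by blast
    then obtain pp where pp: "\<And>i. pp i \<in> L" "\<And>i j. j \<noteq> i \<Longrightarrow> (\<Sum>k\<in>UNIV. \<bar>x$k\<bar>) < pp i $ j"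
      by metis
    have xpp: "x$j < pp i $ j" if "j \<noteq> i" for i j
    proof -
      have "x$j \<le> \<bar>x$j\<bar>" by simp
      also have "\<dots> \<le> (\<Sum>k\<in>UNIV. \<bar>x$k\<bar>)" by (intro member_le_sum) auto
      finally show ?thesis using pp(2)[OF that] by linarith
    qed
    define S where "S = SigmaC L \<inter> {y. cw_le y x}"
    define a :: "real^'n" where "a = (\<chi> i. pp i $ i)"
    have Sbox: "S \<subseteq> cbox a x"
    proof
      fix y assume "y \<in> S"
      then have yT: "y \<in> SigmaC L" and yx: "\<And>i. y$i \<le> x$i" unfolding S_def cw_le_def by auto
      have "pp i $ i \<le> y$i" for i
      proof -
        obtain k where k: "pp i $ k \<le> y$k" using yT pp(1)[of i] unfolding SigmaC_eq by blast
        have "k = i"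
        proof (rule ccontr)
          assume "k \<noteq> i"
          then show False using xpp[of k i] yx[of k] k by linarith
        qed
        then show ?thesis using k by simp
      qed
      then show "y \<in> cbox a x" using yx by (simp add: mem_box_cart a_def)
    qed
    have "closed S"
    proof -
      have "{y. cw_le y x} = (\<Inter>i. {y::real^'n. y$i \<le> x$i})" unfolding cw_le_def by auto
      then have "closed {y. cw_le y x}" by (simp add: closed_INT closed_halfspace_component_le_cart)
      then show ?thesis unfolding S_def SigmaC_def by (intro closed_Int closed_closure)
    qed
    then have "compact S" using Sbox by (meson bounded_cbox bounded_subset compact_eq_bounded_closed)
    moreover have "S \<noteq> {}" using xT unfolding S_def cw_le_def by auto
    moreover have "continuous_on S deg" unfolding deg_def
      by (intro continuous_intros continuous_on_component)
    ultimately obtain \<nu> where nuS: "\<nu> \<in> S" and numin: "\<And>y. y \<in> S \<Longrightarrow> deg \<nu> \<le> deg y"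
      using continuous_attains_inf by metis
    have nuT: "\<nu> \<in> SigmaC L" and nux: "cw_le \<nu> x" using nuS unfolding S_def by auto
    have step: "\<exists>q\<in>L. (\<forall>j. j \<noteq> i \<longrightarrow> \<nu>$j < q$j) \<and> \<nu>$i - e < q$i \<and> q$i \<le> \<nu>$i"
      if e: "e > 0" for i e
    proof -
      define w :: "real^'n" where "w = \<nu> - (\<chi> j. if j = i then e else 0)"
      have "deg w = deg \<nu> - e"
        unfolding w_def deg_diff by (simp add: deg_def)
      then have "w \<notin> S" using numin e by force
      moreover have "cw_le w x" unfolding cw_le_def
      proof
        fix k
        have "w$k \<le> \<nu>$k" using e by (simp add: w_def)
        also have "\<nu>$k \<le> x$k" using nux by (simp add: cw_le_def)
        finally show "w$k \<le> x$k" .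
      qed
      ultimately have "w \<notin> SigmaC L" unfolding S_def by auto
      then obtain q where qL: "q \<in> L" and qw: "\<And>k. w$k < q$k"
        unfolding SigmaC_eq by (auto simp: not_le)
      obtain k where k: "q$k \<le> \<nu>$k" using nuT qL unfolding SigmaC_eq by blast
      have "k = i"
      proof (rule ccontr)
        assume "k \<noteq> i"
        then show False using qw[of k] k by (simp add: w_def)
      qed
      have "\<nu>$j < q$j" if "j \<noteq> i" for j using qw[of j] that by (simp add: w_def)
      moreover have "\<nu>$i - e < q$i" using qw[of i] by (simp add: w_def)
      ultimately show ?thesis
        using qL k \<open>k = i\<close> by blast
    qed
    have intq: "q$i \<in> \<int>" if "q \<in> L" for q i
      using that assms(2) unfolding sublattice_of_A_def A_lattice_def by auto
    have "\<exists>q\<in>L. q$i = \<nu>$i \<and> (\<forall>j. j \<noteq> i \<longrightarrow> \<nu>$j < q$j)" for i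
    proof -
      obtain q where qL: "q \<in> L" and q1: "\<forall>j. j \<noteq> i \<longrightarrow> \<nu>$j < q$j"
        and q2: "\<nu>$i - 1 < q$i" "q$i \<le> \<nu>$i"
        using step[of 1 i] by auto
      have "q$i = \<nu>$i"
      proof (rule ccontr)
        assume "q$i \<noteq> \<nu>$i"
        then have "\<nu>$i - q$i > 0" using q2 by simp
        from step[OF this, of i] obtain q' where "q' \<in> L" "q$i < q'$i" "q'$i \<le> \<nu>$i"
          by auto
        moreover obtain m where "q$i = of_int m" using intq[OF qL] by (auto elim: Ints_cases)
        moreover obtain m' where "q'$i = of_int m'" using intq[OF \<open>q' \<in> L\<close>] by (auto elim: Ints_cases)
        ultimately have "m < m'" "real_of_int m' < of_int m + 1" using q2 by auto
        then show False by linarith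
      qed
      then show ?thesis using qL q1 by blast
    qed
    then obtain qq where qq: "\<And>i. qq i \<in> L" "\<And>i. qq i $ i = \<nu>$i"
      "\<And>i j. j \<noteq> i \<Longrightarrow> \<nu>$j < qq i $ j"
      by metis
    define B where "B = (\<Inter>i. \<Inter>j\<in>-{i}. {y::real^'n. y$j < qq i $ j})"
    have "open B" unfolding B_def
      by (intro open_INT) (auto simp: open_halfspace_component_lt_cart)
    moreover have "\<nu> \<in> B" unfolding B_def using qq(3) by auto
    moreover have "deg \<nu> \<le> deg y" if yB: "y \<in> B \<inter> SigmaC L" for y
    proof -
      have "\<nu>$i \<le> y$i" for i
      proof -
        obtain k where k: "qq i $ k \<le> y$k" using yB qq(1)[of i] unfolding SigmaC_eq by blast
        have "k = i"
        proof (rule ccontr)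
          assume "k \<noteq> i"
          then have "y$k < qq i $ k" using yB unfolding B_def by auto
          then show False using k by linarith
        qed
        then show ?thesis using k qq(2) by simp
      qed
      then show ?thesis unfolding deg_def by (intro sum_mono) auto
    qed
    ultimately have "\<nu> \<in> ExtC L" unfolding ExtC_def using nuT by blast
    then show "x \<in> (\<Union>\<nu>\<in>ExtC L. {x. cw_le \<nu> x})" using nux by blast
  qed
qed

end
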